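(* Let $p\in\mathbb{N}$ and $f(z)=\exp\{z_1+\dots+z_p\}=\sum_{n\in\mathbb{Z}_+^p}\frac{z^n}{n_1!\cdots n_p!}$. Let $(\omega_n)_{n\in\mathbb{Z}_+^p}$ be independent random variables on the Steinhaus probability space, each uniformly distributed on $[0,1]$, and consider the random entire function $f(z,t)=\sum_{n}\frac{e^{2\pi i\omega_n(t)}}{n_1!\cdots n_p!}z^n$, with $M_f(r,t)=\max\{|f(z,t)|\colon|z_1|=r_1,\dots,|z_p|=r_p\}$. Then for every $\varepsilon>0$, for $P$-almost every $t\in[0,1]$ there is a measurable set $E(\varepsilon)=E(\varepsilon,t)\subset\mathbb{R}_+^p$ such that $E(\varepsilon)\cap B(R)$ has infinite logarithmic measure for every $R\in\mathbb{R}_+^p$, and $$M_f(r,t)\ge\mu_f(r)(\ln\mu_f(r))^{p/4-\varepsilon}\quad\text{for all } r\in E(\varepsilon).$$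
   Context: For $r\in\mathbb{R}_+^p$: $r^n=r_1^{n_1}\cdots r_p^{n_p}$, $\mu_f(r)=\max\{|a_n|r^n\colon n\in\mathbb{Z}_+^p\}$ where $a_n$ are the Taylor coefficients of $f$ (here $a_n=1/(n_1!\cdots n_p!)$), $B(R)=\{r\in\mathbb{R}_+^p\colon r_j\ge R_j,\ j=1,\dots,p\}$. A measurable set $E$ has infinite logarithmic measure if $\int\cdots\int_E\prod_{j=1}^p\frac{dr_j}{r_j}=+\infty$. The Steinhaus probability space is $[0,1]$ with Lebesgue measurable sets and Lebesgue measure $P$. *)

theory Defs
  imports "HOL-Probability.Probability"
begin

abbreviation steinhaus :: "real measure" where
  "steinhaus \<equiv> lebesgue_on {0..1}"

text \<open>Multi-indices n in Z_+^p are vectors nat^'p; p = CARD('p).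
  Coefficients a_n = 1/(n_1! ... n_p!), r^n = prod r_j^n_j.\<close>
definition coef :: "nat^'p::finite \<Rightarrow> real" where
  "coef n = 1 / (\<Prod>j\<in>UNIV. fact (n $ j))"

definition mpow :: "'a::comm_monoid_mult ^'p::finite \<Rightarrow> nat^'p \<Rightarrow> 'a" where
  "mpow z n = (\<Prod>j\<in>UNIV. (z $ j) ^ (n $ j))"

definition max_term :: "real^'p::finite \<Rightarrow> real" where
  "max_term r = (SUP n. \<bar>coef n\<bar> * mpow r n)"

definition rand_f :: "(nat^'p::finite \<Rightarrow> real \<Rightarrow> real) \<Rightarrow> complex^'p \<Rightarrow> real \<Rightarrow> complex" where
  "rand_f \<omega> z t = (\<Sum>\<^sub>\<infinity> n. exp (2 * pi * \<i> * complex_of_real (\<omega> n t)) * complex_of_real (coef n) * mpow z n)"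

definition max_mod :: "(nat^'p::finite \<Rightarrow> real \<Rightarrow> real) \<Rightarrow> real^'p \<Rightarrow> real \<Rightarrow> real" where
  "max_mod \<omega> r t = (SUP z\<in>{z. \<forall>j. norm (z $ j) = r $ j}. norm (rand_f \<omega> z t))"

definition Bset :: "real^'p::finite \<Rightarrow> (real^'p) set" where
  "Bset R = {r. \<forall>j. R $ j \<le> r $ j}"

definition log_measure :: "(real^'p::finite) set \<Rightarrow> ennreal" where
  "log_measure E = (\<integral>\<^sup>+ r. indicator E r * ennreal (\<Prod>j\<in>UNIV. 1 / (r $ j)) \<partial>lebesgue)"

end

theory Submission
  imports Defs
begin

definition vbox :: "('p::finite \<Rightarrow> nat set) \<Rightarrow> (nat^'p) set" where
  "vbox B = {n. \<forall>j. n$j \<in> B j}"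

lemma vbox_image: "vbox B = vec_lambda ` (PiE UNIV B)"
proof -
  have "n \<in> vec_lambda ` (PiE UNIV B)" if "n \<in> vbox B" for n
    using that unfolding vbox_def by (intro image_eqI[of _ _ "vec_nth n"]) auto
  moreover have "vec_lambda g \<in> vbox B" if "g \<in> PiE UNIV B" for g
    using that unfolding vbox_def by auto
  ultimately show ?thesis by blast
qed

lemma finite_vbox: "(\<And>j. finite (B j)) \<Longrightarrow> finite (vbox B)"
  unfolding vbox_image by (intro finite_imageI finite_PiE) auto

lemma sum_vbox_prod:
  fixes f :: "'p::finite \<Rightarrow> nat \<Rightarrow> 'c::comm_semiring_1"
  assumes "\<And>j. finite (B j)"
  shows "(\<Sum>n\<in>vbox B. \<Prod>j\<in>UNIV. f j (n$j)) = (\<Prod>j\<in>UNIV. \<Sum>k\<in>B j. f j k)"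
proof -
  have inj: "inj_on vec_lambda (PiE UNIV B)"
    by (auto intro!: inj_onI simp: vec_lambda_inject)
  have "(\<Sum>n\<in>vbox B. \<Prod>j\<in>UNIV. f j (n$j)) = (\<Sum>g\<in>PiE UNIV B. \<Prod>j\<in>UNIV. f j (g j))"
    unfolding vbox_image by (subst sum.reindex[OF inj]) simp
  also have "\<dots> = (\<Prod>j\<in>UNIV. \<Sum>k\<in>B j. f j k)"
    by (rule prod_sum_PiE[symmetric]) (use assms in auto)
  finally show ?thesis .
qed

lemma card_vbox: "(\<And>j. finite (B j)) \<Longrightarrow> card (vbox B) = (\<Prod>j\<in>UNIV. card (B j))"
  using sum_vbox_prod[of B "\<lambda>_ _. 1::nat"] by simp


lemma roots_sum:
  fixes d :: int and N :: nat
  assumes N: "N > 0" and d: "\<bar>d\<bar> < int N"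
  shows "(\<Sum>k<N. cis (2*pi*real k * of_int d / real N)) = (if d = 0 then of_nat N else 0)"
proof (cases "d = 0")
  case True then show ?thesis by simp
next
  case False
  define u where "u = cis (2*pi* of_int d / real N)"
  have pw: "cis (2*pi*real k * of_int d / real N) = u ^ k" for k
  proof -
    have "cis (2*pi*real k * of_int d / real N) = cis (real k * (2*pi * of_int d / real N))"
      by (simp add: field_simps)
    then show ?thesis using Complex.DeMoivre[of "2*pi * of_int d / real N" k] by (simp add: u_def)
  qed
  have uN: "u ^ N = 1"
  proof -
    have "u ^ N = cis (real N * (2*pi * of_int d / real N))"
      unfolding u_def by (rule Complex.DeMoivre)
    also have "real N * (2*pi * of_int d / real N) = 2 * pi * of_int d" using N by simp
    also have "cis (2 * pi * of_int d) = 1" by (rule cis_multiple_2pi) simp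
    finally show ?thesis .
  qed
  have u1: "u \<noteq> 1"
  proof
    assume "u = 1"
    then have "exp (\<i> * complex_of_real (2*pi* of_int d / real N)) = 1"
      unfolding u_def cis_conv_exp by simp
    then obtain n :: int where n: "2*pi* of_int d / real N = of_int (2*n) * pi"
      unfolding exp_eq_1 by auto
    then have "of_int d = real N * of_int n" using N by (simp add: field_simps)
    then have "d = int N * n" by (metis of_int_eq_iff of_int_mult of_int_of_nat_eq)
    then have dn: "\<bar>d\<bar> = int N * \<bar>n\<bar>" by (simp add: abs_mult)
    have "n \<noteq> 0" using False \<open>d = int N * n\<close> by auto
    then have "\<bar>n\<bar> \<ge> 1" by linarith
    then have "int N * 1 \<le> int N * \<bar>n\<bar>" by (intro mult_left_mono) auto
    with dn d show False by simp
  qed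
  have "(\<Sum>k<N. cis (2*pi*real k * of_int d / real N)) = (\<Sum>k<N. u ^ k)"
    by (simp add: pw)
  also have "\<dots> = 0" using geometric_sum[OF u1, of N] uN by simp
  finally show ?thesis using False by simp
qed

lemma parseval_abstract:
  fixes d :: "'n \<Rightarrow> complex" and e :: "'m \<Rightarrow> 'n \<Rightarrow> complex"
  assumes fin: "finite F" "finite M"
    and orth: "\<And>n n'. n \<in> F \<Longrightarrow> n' \<in> F \<Longrightarrow>
        (\<Sum>m\<in>M. e m n * cnj (e m n')) = (if n = n' then of_real K else 0)"
  shows "(\<Sum>m\<in>M. (cmod (\<Sum>n\<in>F. d n * e m n))^2) = K * (\<Sum>n\<in>F. (cmod (d n))^2)"
proof -
  have "complex_of_real (\<Sum>m\<in>M. (cmod (\<Sum>n\<in>F. d n * e m n))^2)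
      = (\<Sum>m\<in>M. (\<Sum>n\<in>F. d n * e m n) * cnj (\<Sum>n\<in>F. d n * e m n))"
    unfolding of_real_sum by (intro sum.cong refl) (rule trans[OF complex_norm_square], simp)
  also have "\<dots> = (\<Sum>m\<in>M. \<Sum>n\<in>F. \<Sum>n'\<in>F. d n * cnj (d n') * (e m n * cnj (e m n')))"
    by (simp add: cnj_sum sum_product mult_ac)
  also have "\<dots> = (\<Sum>n\<in>F. \<Sum>n'\<in>F. d n * cnj (d n') * (\<Sum>m\<in>M. e m n * cnj (e m n')))"
    by (simp add: sum_distrib_left sum.swap[of _ M])
  also have "\<dots> = (\<Sum>n\<in>F. \<Sum>n'\<in>F. d n * cnj (d n') * (if n = n' then of_real K else 0))"
    by (intro sum.cong refl) (simp add: orth)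
  also have "\<dots> = (\<Sum>n\<in>F. d n * cnj (d n) * of_real K)"
    using fin by (simp add: if_distrib cong: if_cong)
  also have "\<dots> = complex_of_real (K * (\<Sum>n\<in>F. (cmod (d n))^2))"
    unfolding of_real_mult of_real_sum sum_distrib_left
    by (intro sum.cong refl) (subst complex_norm_square, simp add: mult_ac)
  finally show ?thesis by (simp only: of_real_eq_iff)
qed


definition Tm :: "real^'p::finite \<Rightarrow> nat^'p \<Rightarrow> real" where
  "Tm r n = coef n * mpow r n"

abbreviation Nbox :: "nat \<Rightarrow> (nat^'p::finite) set" where
  "Nbox N \<equiv> vbox (\<lambda>_. {..<N})"

lemma Tm_prod: "Tm r n = (\<Prod>j\<in>UNIV. r$j ^ (n$j) / fact (n$j))"
  proof -
  have "Tm r n = (\<Prod>j\<in>UNIV. r$j ^ (n$j)) / (\<Prod>j\<in>UNIV. fact (n$j))"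
    unfolding Tm_def coef_def mpow_def
    by (rule trans[OF mult.commute]) (simp only: times_divide_eq_right mult_1_right)
  also have "\<dots> = (\<Prod>j\<in>UNIV. r$j ^ (n$j) / fact (n$j))"
    by (rule prod_dividef[symmetric])
  finally show ?thesis .
qed

lemma Tm_nonneg: "(\<And>j. 0 \<le> r$j) \<Longrightarrow> 0 \<le> Tm r n"
  unfolding Tm_prod by (intro prod_nonneg) auto

lemma exp_partial: "0 \<le> (x::real) \<Longrightarrow> (\<Sum>k<N. x^k / fact k) \<le> exp x"
proof -
  assume x: "0 \<le> x"
  have s: "(\<lambda>k. x^k / fact k) sums exp x"
  proof -
    have "(\<lambda>k. x^k /\<^sub>R fact k) = (\<lambda>k. x^k / fact k)"
      by (rule ext) (simp add: divide_inverse mult.commute)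
    then show ?thesis using exp_converges[of x] by simp
  qed
  have "(\<Sum>k<N. x^k / fact k) \<le> suminf (\<lambda>k. x^k / fact k)"
    by (rule sum_le_suminf[OF sums_summable[OF s]]) (use x in auto)
  then show ?thesis using sums_unique[OF s] by simp
qed

lemma in_Nbox_bound:
  assumes "finite H"
  shows "H \<subseteq> Nbox (Suc (\<Sum>n\<in>H. \<Sum>j\<in>UNIV. n$j))"
proof
  fix n assume n: "n \<in> H"
  have "n$j \<le> (\<Sum>n\<in>H. \<Sum>j\<in>UNIV. n$j)" for j
  proof -
    have "n$j \<le> (\<Sum>j\<in>UNIV. n$j)" by (rule member_le_sum) auto
    also have "\<dots> \<le> (\<Sum>n\<in>H. \<Sum>j\<in>UNIV. n$j)" using n assms by (intro member_le_sum) auto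
    finally show ?thesis .
  qed
  then show "n \<in> Nbox (Suc (\<Sum>n\<in>H. \<Sum>j\<in>UNIV. n$j))"
    unfolding vbox_def by (simp add: less_Suc_eq_le)
qed

lemma sum_Tm_Nbox:
  "(\<Sum>n\<in>Nbox N. Tm r n) = (\<Prod>j\<in>UNIV. \<Sum>k<N. r$j ^ k / fact k)"
  unfolding Tm_prod by (rule sum_vbox_prod) auto

lemma Tm_summable:
  assumes r: "\<And>j. 0 \<le> r$j"
  shows "Tm r summable_on UNIV"
proof (rule nonneg_bdd_above_summable_on)
  show "0 \<le> Tm r n" for n using Tm_nonneg r by blast
  show "bdd_above (sum (Tm r) ` {F. F \<subseteq> UNIV \<and> finite F})"
  proof (rule bdd_aboveI2)
    fix H :: "(nat^'a) set" assume "H \<in> {F. F \<subseteq> UNIV \<and> finite F}"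
    then have H: "finite H" by auto
    define N where "N = Suc (\<Sum>n\<in>H. \<Sum>j\<in>UNIV. n$j)"
    have "sum (Tm r) H \<le> (\<Sum>n\<in>Nbox N. Tm r n)"
    proof (rule sum_mono2)
      show "finite (Nbox N :: (nat^'a) set)" by (rule finite_vbox) simp
      show "H \<subseteq> Nbox N" using in_Nbox_bound[OF H] unfolding N_def .
      show "0 \<le> Tm r b" for b using Tm_nonneg r by blast
    qed
    also have "\<dots> \<le> (\<Prod>j\<in>UNIV. exp (r$j))"
      unfolding sum_Tm_Nbox
    proof (rule prod_mono, rule conjI)
      fix j :: 'a
      show "0 \<le> (\<Sum>k<N. r$j ^ k / fact k)" using r by (intro sum_nonneg) simp
      show "(\<Sum>k<N. r$j ^ k / fact k) \<le> exp (r$j)" using r by (intro exp_partial)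
    qed
    finally show "sum (Tm r) H \<le> (\<Prod>j\<in>UNIV. exp (r$j))" .
  qed
qed



lemma coef_nonneg: "0 \<le> coef n"
  unfolding coef_def by (intro divide_nonneg_pos prod_pos) auto

lemma orth_grid:
  fixes n n' :: "nat^'p::finite"
  assumes N: "N > 0" and n: "n \<in> Nbox N" and n': "n' \<in> Nbox N"
  shows "(\<Sum>m\<in>Nbox N. (\<Prod>j\<in>UNIV. cis (2*pi*real (m$j)*real (n$j)/real N)) *
             cnj (\<Prod>j\<in>UNIV. cis (2*pi*real (m$j)*real (n'$j)/real N)))
         = (if n = n' then complex_of_real (real N ^ CARD('p)) else 0)"
proof -
  define d where "d j = int (n$j) - int (n'$j)" for j
  have dlt: "\<bar>d j\<bar> < int N" for j
  proof -
    have "n$j < N" "n'$j < N" using n n' unfolding vbox_def by auto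
    then show ?thesis unfolding d_def by linarith
  qed
  have eq: "(\<Prod>j\<in>UNIV. cis (2*pi*real (m$j)*real (n$j)/real N)) *
             cnj (\<Prod>j\<in>UNIV. cis (2*pi*real (m$j)*real (n'$j)/real N))
        = (\<Prod>j\<in>UNIV. cis (2*pi*real (m$j) * of_int (d j)/real N))" for m :: "nat^'p"
  proof -
    have "(\<Prod>j\<in>UNIV. cis (2*pi*real (m$j)*real (n$j)/real N)) *
             cnj (\<Prod>j\<in>UNIV. cis (2*pi*real (m$j)*real (n'$j)/real N))
        = (\<Prod>j\<in>UNIV. cis (2*pi*real (m$j)*real (n$j)/real N) * cis (- (2*pi*real (m$j)*real (n'$j)/real N)))"
      by (simp add: cis_cnj prod.distrib)
    also have "\<dots> = (\<Prod>j\<in>UNIV. cis (2*pi*real (m$j) * of_int (d j)/real N))"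
      by (intro prod.cong refl) (simp add: cis_mult d_def algebra_simps diff_divide_distrib)
    finally show ?thesis .
  qed
  have "(\<Sum>m\<in>Nbox N. (\<Prod>j\<in>UNIV. cis (2*pi*real (m$j)*real (n$j)/real N)) *
             cnj (\<Prod>j\<in>UNIV. cis (2*pi*real (m$j)*real (n'$j)/real N)))
      = (\<Sum>m\<in>Nbox N. \<Prod>j\<in>UNIV. cis (2*pi*real (m$j) * of_int (d j)/real N))"
    by (simp only: eq)
  also have "\<dots> = (\<Prod>j\<in>UNIV. \<Sum>k\<in>{..<N}. cis (2*pi*real k * of_int (d j)/real N))"
    by (rule sum_vbox_prod) simp
  also have "\<dots> = (\<Prod>j\<in>UNIV. if d j = 0 then of_nat N else 0)"
    by (intro prod.cong refl roots_sum[OF N dlt])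
  also have "\<dots> = (if n = n' then complex_of_real (real N ^ CARD('p)) else 0)"
  proof (cases "n = n'")
    case True
    then show ?thesis by (simp add: d_def)
  next
    case False
    then obtain j where "n$j \<noteq> n'$j" by (auto simp: vec_eq_iff)
    then have "d j \<noteq> 0" by (simp add: d_def)
    then show ?thesis using False by (intro trans[OF prod_zero]) auto
  qed
  finally show ?thesis .
qed



lemma keyA:
  fixes r :: "real^'p::finite" and \<omega> :: "nat^'p \<Rightarrow> real \<Rightarrow> real" and t :: real
  assumes r: "\<And>j. 0 \<le> r$j" and G: "finite G"
  shows "sqrt (\<Sum>n\<in>G. (Tm r n)^2) \<le> max_mod \<omega> r t"
proof -
  define c where "c n = exp (2 * pi * \<i> * complex_of_real (\<omega> n t)) * complex_of_real (coef n)" for n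
  define Z where "Z = {z::complex^'p. \<forall>j. norm (z$j) = r$j}"
  define g where "g z n = c n * mpow z n" for z n
  have rf: "rand_f \<omega> z t = infsum (g z) UNIV" for z
    unfolding rand_f_def by (rule infsum_cong) (simp add: g_def c_def)
  have nc: "norm (c n) = coef n" for n
    using coef_nonneg[of n] by (simp add: c_def norm_mult)
  have nmp: "norm (mpow z n) = mpow r n" if "z \<in> Z" for z n
    using that unfolding Z_def mpow_def by (simp add: prod_norm[symmetric] norm_power)
  have ng: "norm (g z n) = Tm r n" if "z \<in> Z" for z n
    using nmp[OF that] by (simp add: g_def norm_mult nc Tm_def)
  define S where "S = infsum (Tm r) UNIV"
  have Tsum: "Tm r summable_on A" for A
    using summable_on_subset[OF Tm_summable[OF r]] by blast
  have gabs: "(\<lambda>n. norm (g z n)) summable_on A" if "z \<in> Z" for z A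
    using Tsum[of A] ng[OF that] by simp
  have gsum: "g z summable_on A" if "z \<in> Z" for z A
    using gabs[OF that] summable_on_iff_abs_summable_on_complex by blast
  have bound: "norm (rand_f \<omega> z t) \<le> S" if "z \<in> Z" for z
  proof -
    have "norm (rand_f \<omega> z t) \<le> infsum (\<lambda>n. norm (g z n)) UNIV"
      unfolding rf by (rule norm_infsum_bound) (rule gabs[OF that])
    also have "\<dots> = S" unfolding S_def using ng[OF that] by simp
    finally show ?thesis .
  qed
  have mm: "max_mod \<omega> r t = (SUP z\<in>Z. norm (rand_f \<omega> z t))"
    unfolding max_mod_def Z_def ..
  have up: "norm (rand_f \<omega> z t) \<le> max_mod \<omega> r t" if "z \<in> Z" for z
    unfolding mm using bound that by (intro cSUP_upper bdd_aboveI2) auto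
  show ?thesis
  proof (rule field_le_epsilon)
    fix \<delta> :: real assume \<delta>: "0 < \<delta>"
    obtain H0 where H0: "finite H0" "dist (sum (Tm r) H0) S \<le> \<delta>"
      using infsum_finite_approximation[OF Tm_summable[OF r] \<delta>] unfolding S_def by blast
    define N where "N = Suc (\<Sum>n\<in>H0 \<union> G. \<Sum>j\<in>UNIV. n$j)"
    define F :: "(nat^'p) set" where "F = Nbox N"
    have N: "N > 0" unfolding N_def by simp
    have finF: "finite F" unfolding F_def by (rule finite_vbox) simp
    have HGF: "H0 \<union> G \<subseteq> F" unfolding F_def N_def using in_Nbox_bound H0(1) G by blast
    have Tnn: "0 \<le> Tm r n" for n using Tm_nonneg r by blast
    have tail: "S - sum (Tm r) F \<le> \<delta>"
    proof -
      have "sum (Tm r) H0 \<le> sum (Tm r) F" using HGF finF Tnn by (intro sum_mono2) auto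
      moreover have "S - sum (Tm r) H0 \<le> \<delta>" using H0(2) by (simp add: dist_real_def)
      ultimately show ?thesis by linarith
    qed
    define zp :: "nat^'p \<Rightarrow> complex^'p" where
      "zp m = (\<chi> j. complex_of_real (r$j) * cis (2*pi*real (m$j)/real N))" for m
    define e where "e m n = (\<Prod>j\<in>UNIV. cis (2*pi*real (m$j)*real (n$j)/real N))" for m n :: "nat^'p"
    have zpZ: "zp m \<in> Z" for m
      unfolding Z_def zp_def using r by (simp add: norm_mult)
    have mp: "mpow (zp m) n = complex_of_real (mpow r n) * e m n" for m n
    proof -
      have "mpow (zp m) n = (\<Prod>j\<in>UNIV. complex_of_real (r$j ^ (n$j)) * cis (2*pi*real (m$j)/real N) ^ (n$j))"
        unfolding mpow_def zp_def by (simp add: power_mult_distrib)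
      also have "\<dots> = (\<Prod>j\<in>UNIV. complex_of_real (r$j ^ (n$j)) * cis (2*pi*real (m$j)*real (n$j)/real N))"
      proof (intro prod.cong refl)
        fix j
        have "cis (2*pi*real (m$j)/real N) ^ (n$j) = cis (real (n$j) * (2*pi*real (m$j)/real N))"
          by (rule Complex.DeMoivre)
        also have "\<dots> = cis (2*pi*real (m$j)*real (n$j)/real N)" by (simp add: field_simps)
        finally show "complex_of_real (r$j ^ (n$j)) * cis (2*pi*real (m$j)/real N) ^ (n$j) =
           complex_of_real (r$j ^ (n$j)) * cis (2*pi*real (m$j)*real (n$j)/real N)" by simp
      qed
      also have "\<dots> = complex_of_real (mpow r n) * e m n"
        unfolding mpow_def e_def prod.distrib of_real_prod ..
      finally show ?thesis .
    qed
    define dd where "dd n = c n * complex_of_real (mpow r n)" for n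
    have ndd: "cmod (dd n) = Tm r n" for n
    proof -
      have "0 \<le> mpow r n" unfolding mpow_def using r by (intro prod_nonneg) auto
      then show ?thesis by (simp add: dd_def norm_mult nc Tm_def)
    qed
    define P where "P m = (\<Sum>n\<in>F. dd n * e m n)" for m
    have Pg: "P m = sum (g (zp m)) F" for m
      unfolding P_def g_def dd_def mp by (simp add: mult.assoc)
    have pars: "(\<Sum>m\<in>F. (cmod (P m))^2) = real N ^ CARD('p) * (\<Sum>n\<in>F. (Tm r n)^2)"
      unfolding P_def ndd[symmetric]
      by (rule parseval_abstract[OF finF finF]) (unfold F_def e_def, rule orth_grid[OF N])
    have cardF: "card F = N ^ CARD('p)"
      unfolding F_def by (subst card_vbox) simp_all
    define A where "A = (\<Sum>n\<in>F. (Tm r n)^2)"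
    obtain m where m: "m \<in> F" "A \<le> (cmod (P m))^2"
    proof (rule ccontr)
      assume "\<not> thesis"
      with that have lt: "\<And>m. m \<in> F \<Longrightarrow> (cmod (P m))^2 < A" by force
      have "F \<noteq> {}" using cardF N by auto
      then have "(\<Sum>m\<in>F. (cmod (P m))^2) < (\<Sum>m\<in>F. A)"
        using finF lt by (intro sum_strict_mono) auto
      also have "\<dots> = real N ^ CARD('p) * A" using cardF by simp
      finally show False using pars unfolding A_def by simp
    qed
    have "sqrt (\<Sum>n\<in>G. (Tm r n)^2) \<le> sqrt A"
      unfolding A_def real_sqrt_le_iff using HGF finF by (intro sum_mono2) auto
    also have "\<dots> \<le> cmod (P m)"
      using m(2) by (metis abs_norm_cancel real_sqrt_abs real_sqrt_le_iff)
    also have "\<dots> \<le> norm (rand_f \<omega> (zp m) t) + \<delta>"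
    proof -
      have split: "rand_f \<omega> (zp m) t = P m + infsum (g (zp m)) (UNIV - F)"
        unfolding rf Pg
        by (subst infsum_Diff[OF gsum[OF zpZ] gsum[OF zpZ]]) (simp_all add: finF)
      have "norm (infsum (g (zp m)) (UNIV - F)) \<le> infsum (\<lambda>n. norm (g (zp m) n)) (UNIV - F)"
        by (rule norm_infsum_bound) (rule gabs[OF zpZ])
      also have "\<dots> = infsum (Tm r) (UNIV - F)" using ng[OF zpZ] by simp
      also have "\<dots> = S - sum (Tm r) F"
        unfolding S_def by (subst infsum_Diff[OF Tsum Tsum]) (simp_all add: finF)
      also have "\<dots> \<le> \<delta>" by (rule tail)
      finally have "norm (infsum (g (zp m)) (UNIV - F)) \<le> \<delta>" .
      then show ?thesis unfolding split using norm_triangle_ineq4[of "P m + infsum (g (zp m)) (UNIV - F)" "infsum (g (zp m)) (UNIV - F)"]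
        by (smt (verit) add_diff_cancel_right' norm_triangle_sub)
    qed
    also have "\<dots> \<le> max_mod \<omega> r t + \<delta>" using up[OF zpZ] by simp
    finally show "sqrt (\<Sum>n\<in>G. (Tm r n)^2) \<le> max_mod \<omega> r t + \<delta>" .
  qed
qed



lemma termC:
  fixes x :: real
  assumes "i \<le> j" "real j \<le> x"
  shows "x^i / fact i \<le> x^j / fact j"
  using assms
proof (induction j)
  case 0 then show ?case by simp
next
  case (Suc j)
  show ?case
  proof (cases "i = Suc j")
    case True then show ?thesis by simp
  next
    case False
    then have ij: "i \<le> j" using Suc.prems by simp
    have x: "real (Suc j) \<le> x" using Suc.prems by simp
    then have xpos: "0 \<le> x" by linarith
    have "x^i / fact i \<le> x^j / fact j" using Suc.IH ij x by simp
    also have "\<dots> \<le> x^j / fact j * (x / real (Suc j))"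
    proof -
      have "1 \<le> x / real (Suc j)" using x by simp
      moreover have "0 \<le> x^j / fact j" using xpos by simp
      ultimately show ?thesis by (metis mult_le_cancel_left1 order.refl mult.commute mult_right_mono mult_1_left)
    qed
    also have "\<dots> = x^(Suc j) / fact (Suc j)" by (simp add: field_simps)
    finally show ?thesis .
  qed
qed

lemma termD:
  fixes x :: real
  assumes "k \<le> i" "x \<le> real k + 1" "0 \<le> x"
  shows "x^i / fact i \<le> x^k / fact k"
  using assms
proof (induction i)
  case 0 then show ?case by simp
next
  case (Suc i)
  show ?case
  proof (cases "k = Suc i")
    case True then show ?thesis by simp
  next
    case False
    then have ki: "k \<le> i" using Suc.prems by simp
    have "x^(Suc i) / fact (Suc i) = x^i / fact i * (x / real (Suc i))" by (simp add: field_simps)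
    also have "\<dots> \<le> x^i / fact i * 1"
    proof (rule mult_left_mono)
      show "x / real (Suc i) \<le> 1" using Suc.prems ki by (simp add: field_simps)
      show "0 \<le> x^i / fact i" using Suc.prems by simp
    qed
    also have "\<dots> \<le> x^k / fact k" using Suc.IH ki Suc.prems by simp
    finally show ?thesis .
  qed
qed

lemma termB:
  fixes x :: real
  assumes x: "0 < x"
  shows "x^j / fact j \<le> x^(j+d) / fact (j+d) * (real (j+d) / x)^d"
proof (induction d arbitrary: j)
  case 0 then show ?case by simp
next
  case (Suc d)
  have "x^(Suc j) / fact (Suc j) * (real (Suc j) / x) = (x * x^j) / (real (Suc j) * fact j) * (real (Suc j) / x)"
    by (simp only: power_Suc fact_Suc of_nat_mult)
  also have "\<dots> = x^j / fact j" using x by (simp add: divide_simps)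
  finally have "x^j / fact j = x^(Suc j) / fact (Suc j) * (real (Suc j) / x)" by simp
  also have "\<dots> \<le> x^(Suc j + d) / fact (Suc j + d) * (real (Suc j + d) / x)^d * (real (Suc j) / x)"
    by (rule mult_right_mono[OF Suc.IH]) (use x in simp)
  also have "\<dots> \<le> x^(Suc j + d) / fact (Suc j + d) * (real (Suc j + d) / x)^d * (real (Suc j + d) / x)"
    by (rule mult_left_mono) (use x in \<open>auto intro!: divide_right_mono\<close>)
  also have "\<dots> = x^(j + Suc d) / fact (j + Suc d) * (real (j + Suc d) / x)^(Suc d)"
    by (simp add: field_simps)
  finally show ?case .
qed

lemma win:
  fixes x :: real and L k i :: nat
  assumes x: "1 \<le> x" and L: "real L ^ 2 \<le> x"
    and k: "nat \<lfloor>x\<rfloor> \<le> k" "k < nat \<lfloor>x\<rfloor> + L"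
  shows "x^i / fact i \<le> exp 1 * (x^k / fact k)"
proof -
  define f where "f = nat \<lfloor>x\<rfloor>"
  have f1: "real f \<le> x" "x < real f + 1" unfolding f_def using x by linarith+
  have tk: "0 \<le> x^k / fact k" using x by simp
  show ?thesis
  proof (cases "k \<le> i")
    case True
    have "x^i / fact i \<le> x^k / fact k"
    proof (rule termD[OF True])
      have "real f \<le> real k" using k(1) unfolding f_def by simp
      then show "x \<le> real k + 1" using f1 by linarith
      show "0 \<le> x" using x by simp
    qed
    also have "\<dots> = 1 * (x^k / fact k)" by simp
    also have "\<dots> \<le> exp 1 * (x^k / fact k)" by (rule mult_right_mono) (use tk in auto)
    finally show ?thesis .
  next
    case False
    define j where "j = max i f"
    have jk: "j \<le> k" using False k unfolding j_def f_def by auto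
    have "x^i / fact i \<le> x^j / fact j"
    proof (cases "i \<le> f")
      case True
      then have "j = f" unfolding j_def by simp
      then show ?thesis using termC[OF True f1(1)] by simp
    next
      case False
      then have "j = i" unfolding j_def by simp
      then show ?thesis by simp
    qed
    also have "\<dots> \<le> x^(j + (k-j)) / fact (j + (k-j)) * (real (j + (k-j)) / x)^(k-j)"
      by (rule termB) (use x in simp)
    also have "\<dots> = x^k / fact k * (real k / x)^(k-j)" using jk by simp
    also have "\<dots> \<le> x^k / fact k * exp 1"
    proof (rule mult_left_mono[OF _ tk])
      have kj: "k - j \<le> L" using k jk unfolding j_def f_def by auto
      have "real k \<le> real f + real L" using k(2) unfolding f_def by simp
      then have "real k \<le> x + real L" using f1 by linarith
      then have kx: "real k / x \<le> 1 + real L / x"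
        using x by (simp add: field_simps)
      have kx1: "1 \<le> 1 + real L / x" using x by simp
      have "(real k / x)^(k-j) \<le> (1 + real L / x)^(k-j)"
        by (rule power_mono[OF kx]) (use x in simp)
      also have "\<dots> \<le> (1 + real L / x)^L" by (rule power_increasing[OF kj kx1])
      also have "\<dots> \<le> (exp (real L / x))^L" by (rule power_mono) (use x in auto)
      also have "\<dots> = exp (real L * real L / x)" by (simp add: exp_of_nat_mult[symmetric])
      also have "\<dots> \<le> exp 1" using L x by (simp add: power2_eq_square)
      finally show "(real k / x)^(k-j) \<le> exp 1" .
    qed
    finally show ?thesis by (simp add: mult.commute)
  qed
qed



lemma term_le_exp: "0 \<le> (x::real) \<Longrightarrow> x^k / fact k \<le> exp x"
proof -
  assume x: "0 \<le> x"
  have "x^k / fact k \<le> (\<Sum>i<Suc k. x^i / fact i)"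
    by (rule member_le_sum) (use x in auto)
  also have "\<dots> \<le> exp x" by (rule exp_partial[OF x])
  finally show ?thesis .
qed

lemma max_term_Tm: "max_term r = (SUP n. Tm r n)"
proof -
  have "(\<lambda>n. \<bar>coef n\<bar> * mpow r n) = (\<lambda>n. coef n * mpow r n)"
    by (intro ext) (simp add: abs_of_nonneg coef_nonneg)
  then show ?thesis unfolding max_term_def Tm_def by (simp only:)
qed

lemma stepB:
  fixes r :: "real^'p::finite" and s :: real
  assumes s: "4 \<le> s" and rs: "\<And>j. s < r$j" "\<And>j. r$j < 2 * s"
  shows "s \<le> max_term r"
    and "ln (max_term r) \<le> 2 * real CARD('p) * s"
    and "sqrt (real (nat \<lfloor>sqrt s\<rfloor>) ^ CARD('p)) / exp (real CARD('p)) * max_term r \<le> max_mod \<omega> r t"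
proof -
  define L where "L = nat \<lfloor>sqrt s\<rfloor>"
  define p where "p = CARD('p)"
  have p1: "1 \<le> p" unfolding p_def by (simp add: Suc_le_eq)
  have r0: "0 \<le> r$j" for j using rs(1)[of j] s by linarith
  have sq2: "2 \<le> sqrt s" using s real_sqrt_le_mono[of 4 s] by simp
  have L1: "real L \<le> sqrt s" "sqrt s - 1 \<le> real L" unfolding L_def using sq2 by linarith+
  have L2: "real L ^ 2 \<le> r$j" for j
  proof -
    have "real L ^ 2 \<le> (sqrt s)^2" using L1 sq2 by (intro power_mono) auto
    also have "\<dots> = s" using s by simp
    finally show ?thesis using rs(1)[of j] by linarith
  qed
  have rj1: "1 \<le> r$j" for j using rs(1)[of j] s by linarith
  define G where "G = vbox (\<lambda>j. {nat \<lfloor>r$j\<rfloor>..<nat \<lfloor>r$j\<rfloor> + L})"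
  have Lpos: "L \<ge> 1" using L1 sq2 by linarith
  have finG: "finite G" unfolding G_def by (rule finite_vbox) simp
  have cardG: "card G = L ^ p" unfolding G_def p_def by (subst card_vbox) simp_all
  define n0 where "n0 = (\<chi> j. nat \<lfloor>r$j\<rfloor>)"
  have n0G: "n0 \<in> G" unfolding G_def vbox_def n0_def using Lpos by auto
  have dom: "Tm r n' \<le> exp (real p) * Tm r n" if n: "n \<in> G" for n n'
  proof -
    have "Tm r n' = (\<Prod>j\<in>UNIV. r$j ^ (n'$j) / fact (n'$j))" by (rule Tm_prod)
    also have "\<dots> \<le> (\<Prod>j\<in>UNIV. exp 1 * (r$j ^ (n$j) / fact (n$j)))"
    proof (rule prod_mono, rule conjI)
      fix j
      show "0 \<le> r$j ^ (n'$j) / fact (n'$j)" using r0[of j] by simp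
      have "n$j \<in> {nat \<lfloor>r$j\<rfloor>..<nat \<lfloor>r$j\<rfloor> + L}" using n unfolding G_def vbox_def by auto
      then show "r$j ^ (n'$j) / fact (n'$j) \<le> exp 1 * (r$j ^ (n$j) / fact (n$j))"
        using win[OF rj1[of j] L2[of j]] by auto
    qed
    also have "\<dots> = exp 1 ^ p * Tm r n"
      unfolding Tm_prod prod.distrib p_def by simp
    also have "exp 1 ^ p = exp (real p)" by (simp add: exp_of_nat_mult[symmetric])
    finally show ?thesis .
  qed
  have bdd: "bdd_above (range (Tm r))"
    using dom[OF n0G] by (intro bdd_aboveI2) auto
  have mu_le: "max_term r \<le> exp (real p) * Tm r n" if "n \<in> G" for n
    unfolding max_term_Tm by (rule cSUP_least) (use dom[OF that] in auto)
  have mu_ge: "Tm r n \<le> max_term r" for n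
    unfolding max_term_Tm by (rule cSUP_upper[OF _ bdd]) simp
  have mu0: "0 \<le> max_term r" using mu_ge[of n0] Tm_nonneg[OF r0] by (meson order.trans)
  define one :: "nat^'p" where "one = (\<chi> j. 1)"
  have "s \<le> s ^ p" using s p1 power_increasing[of 1 p s] by simp
  also have "\<dots> = (\<Prod>j\<in>(UNIV::'p set). s)" unfolding p_def by simp
  also have "\<dots> \<le> (\<Prod>j\<in>UNIV. r$j)"
    by (rule prod_mono) (use s rs(1) in \<open>auto intro: less_imp_le\<close>)
  also have "\<dots> = Tm r one" unfolding Tm_prod one_def by simp
  also have "\<dots> \<le> max_term r" by (rule mu_ge)
  finally show "s \<le> max_term r" .
  have "max_term r \<le> exp (\<Sum>j\<in>UNIV. r$j)"
    unfolding max_term_Tm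
  proof (rule cSUP_least)
    fix n
    have "Tm r n \<le> (\<Prod>j\<in>UNIV. exp (r$j))"
      unfolding Tm_prod by (rule prod_mono) (use r0 term_le_exp in auto)
    then show "Tm r n \<le> exp (\<Sum>j\<in>UNIV. r$j)" by (simp add: exp_sum)
  qed simp
  moreover have "0 < max_term r" using \<open>s \<le> max_term r\<close> s by linarith
  ultimately have "ln (max_term r) \<le> (\<Sum>j\<in>UNIV. r$j)"
    using ln_le_cancel_iff[of "max_term r" "exp (\<Sum>j\<in>UNIV. r$j)"] by simp
  also have "\<dots> \<le> (\<Sum>j\<in>(UNIV::'p set). 2 * s)" by (rule sum_mono) (use rs(2) in \<open>auto intro: less_imp_le\<close>)
  also have "\<dots> = 2 * real CARD('p) * s" by simp
  finally show "ln (max_term r) \<le> 2 * real CARD('p) * s" .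
  have "real (card G) * (max_term r / exp (real p))^2 = (\<Sum>n\<in>G. (max_term r / exp (real p))^2)"
    by simp
  also have "\<dots> \<le> (\<Sum>n\<in>G. (Tm r n)^2)"
  proof (rule sum_mono)
    fix n assume n: "n \<in> G"
    have "max_term r / exp (real p) \<le> Tm r n" using mu_le[OF n] by (simp add: divide_le_eq mult.commute)
    then show "(max_term r / exp (real p))^2 \<le> (Tm r n)^2"
      by (rule power_mono) (use mu0 in simp)
  qed
  finally have "sqrt (real (card G) * (max_term r / exp (real p))^2) \<le> sqrt (\<Sum>n\<in>G. (Tm r n)^2)"
    by simp
  also have "\<dots> \<le> max_mod \<omega> r t" by (rule keyA[OF r0 finG])
  finally have "sqrt (real (card G) * (max_term r / exp (real p))^2) \<le> max_mod \<omega> r t" .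
  moreover have "sqrt (real (card G) * (max_term r / exp (real p))^2) =
     sqrt (real L ^ p) / exp (real p) * max_term r"
    unfolding cardG real_sqrt_mult using mu0 by simp
  ultimately show "sqrt (real (nat \<lfloor>sqrt s\<rfloor>) ^ CARD('p)) / exp (real CARD('p)) * max_term r \<le> max_mod \<omega> r t"
    unfolding L_def p_def by simp
qed



lemma final_ineq:
  fixes p :: nat and \<epsilon> s \<mu> M :: real
  assumes p1: "1 \<le> p" and e: "0 < \<epsilon>" and s1: "4 * exp 4 \<le> s"
    and s2: "(8 * real p) powr (real p / 4) * exp (real p) \<le> s powr \<epsilon>"
    and mu1: "s \<le> \<mu>" and mu2: "ln \<mu> \<le> 2 * real p * s"
    and M: "sqrt (real (nat \<lfloor>sqrt s\<rfloor>) ^ p) / exp (real p) * \<mu> \<le> M"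
  shows "\<mu> * ln \<mu> powr (real p / 4 - \<epsilon>) \<le> M"
proof -
  define L where "L = nat \<lfloor>sqrt s\<rfloor>"
  define a where "a = real p / 4 - \<epsilon>"
  define \<Lambda> where "\<Lambda> = sqrt (real L ^ p)"
  have e4: "exp 1 \<le> exp (4::real)" by simp
  have exp1: "1 \<le> exp (4::real)" by simp
  have s4: "4 \<le> s" using s1 exp1 by linarith
  have sq2: "2 \<le> sqrt s" using s4 real_sqrt_le_mono[of 4 s] by simp
  have Lb: "sqrt s / 2 \<le> real L" unfolding L_def using sq2 by linarith
  have Lpos: "0 < real L" using Lb sq2 by linarith
  have "\<Lambda> = real L powr (real p / 2)"
    unfolding \<Lambda>_def using Lpos by (simp add: powr_half_sqrt_powr powr_realpow)
  also have "\<dots> \<ge> (sqrt s / 2) powr (real p / 2)"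
    by (rule powr_mono2) (use Lb sq2 s4 in auto)
  finally have "(sqrt s / 2) powr (real p / 2) \<le> \<Lambda>" .
  moreover have "(sqrt s / 2) powr (real p / 2) = (s / 4) powr (real p / 4)"
  proof -
    have "sqrt s / 2 = (s / 4) powr (1/2)"
      using s4 by (simp add: powr_half_sqrt real_sqrt_divide)
    then show ?thesis by (simp add: powr_powr)
  qed
  ultimately have Lam: "(s / 4) powr (real p / 4) \<le> \<Lambda>" by simp
  have mupos: "0 < \<mu>" using mu1 s4 by linarith
  have l1: "1 \<le> ln \<mu>"
  proof -
    have "exp 1 \<le> s" using s1 e4 exp1 by (smt (verit) mult_le_cancel_right1)
    then have "exp 1 \<le> \<mu>" using mu1 by linarith
    then show ?thesis using mupos by (metis exp_le_cancel_iff exp_ln)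
  qed
  have key: "ln \<mu> powr a * exp (real p) \<le> \<Lambda>"
  proof (cases "a \<le> 0")
    case True
    have "ln \<mu> powr a \<le> ln \<mu> powr 0" by (rule powr_mono[OF True l1])
    also have "\<dots> = 1" using l1 by simp
    finally have A: "ln \<mu> powr a * exp (real p) \<le> exp (real p)"
      by (simp add: mult_le_cancel_right1)
    have "exp (real p) = exp 4 powr (real p / 4)" by (simp add: exp_powr_real)
    also have "\<dots> \<le> (s / 4) powr (real p / 4)" by (rule powr_mono2) (use s1 in auto)
    also have "\<dots> \<le> \<Lambda>" by (rule Lam)
    finally show ?thesis using A by linarith
  next
    case False
    then have a0: "0 \<le> a" by simp
    have p0: "0 < real p" using p1 by simp
    have "ln \<mu> powr a \<le> (2 * real p * s) powr a"
      by (rule powr_mono2[OF a0]) (use l1 mu2 in auto)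
    also have "\<dots> = (2 * real p) powr a * s powr a" by (simp add: powr_mult)
    also have "(2 * real p) powr a \<le> (2 * real p) powr (real p / 4)"
      by (rule powr_mono) (use e p1 in \<open>auto simp: a_def\<close>)
    also have "s powr a = s powr (real p / 4) / s powr \<epsilon>" unfolding a_def by (rule powr_diff)
    finally have B: "ln \<mu> powr a \<le> (2 * real p) powr (real p / 4) * (s powr (real p / 4) / s powr \<epsilon>)"
      using s4 by (simp add: mult_right_mono)
    have spos: "0 < s powr \<epsilon>" using s4 by simp
    have C: "(8 * real p) powr (real p / 4) > 0" using p0 by simp
    have "ln \<mu> powr a * exp (real p) \<le> (2 * real p) powr (real p / 4) * (s powr (real p / 4) / s powr \<epsilon>) * exp (real p)"
      by (rule mult_right_mono[OF B]) simp
    also have "\<dots> \<le> (2 * real p) powr (real p / 4) * (s powr (real p / 4) / ((8 * real p) powr (real p / 4) * exp (real p))) * exp (real p)"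
    proof -
      have "s powr (real p / 4) / s powr \<epsilon> \<le> s powr (real p / 4) / ((8 * real p) powr (real p / 4) * exp (real p))"
        by (rule divide_left_mono[OF s2]) (use C spos in auto)
      then show ?thesis by (intro mult_right_mono mult_left_mono) auto
    qed
    also have "\<dots> = s powr (real p / 4) / 4 powr (real p / 4)"
    proof -
      have h8: "(8 * real p) powr (real p / 4) = 4 powr (real p / 4) * (2 * real p) powr (real p / 4)"
        unfolding powr_mult[symmetric] by simp
      have "(2 * real p) powr (real p / 4) > 0" using p0 by simp
      then show ?thesis unfolding h8 by (simp add: field_simps)
    qed
    also have "\<dots> = (s / 4) powr (real p / 4)" by (simp add: powr_divide)
    also have "\<dots> \<le> \<Lambda>" by (rule Lam)
    finally show ?thesis .
  qed
  have "\<mu> * ln \<mu> powr a \<le> \<mu> * (\<Lambda> / exp (real p))"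
    using key mupos by (intro mult_left_mono) (auto simp: field_simps)
  also have "\<dots> \<le> M" using M unfolding \<Lambda>_def L_def by (simp add: field_simps)
  finally show ?thesis unfolding a_def .
qed



definition Qk :: "nat \<Rightarrow> (real^'p::finite) set" where
  "Qk k = box (\<chi> j. 2^k) (\<chi> j. 2^(k+1))"

lemma mem_Qk: "r \<in> Qk k \<longleftrightarrow> (\<forall>j. 2^k < r$j \<and> r$j < 2^(k+1))"
  unfolding Qk_def mem_box_cart by simp

lemma Qk_disj:
  assumes "r \<in> Qk k" "r \<in> Qk k'" shows "k = k'"
proof (rule ccontr)
  assume ne: "k \<noteq> k'"
  define j :: 'a where "j = undefined"
  have a: "2^k < r$j" "r$j < 2^(k+1)" "2^k' < r$j" "r$j < (2::real)^(k'+1)"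
    using assms unfolding mem_Qk by auto
  show False
  proof (cases "k < k'")
    case True
    then have "(2::real)^(k+1) \<le> 2^k'" by (intro power_increasing) auto
    with a show False by linarith
  next
    case False
    then have "k' < k" using ne by simp
    then have "(2::real)^(k'+1) \<le> 2^k" by (intro power_increasing) auto
    with a show False by linarith
  qed
qed

lemma Qk_sets: "Qk k \<in> sets lebesgue"
  unfolding Qk_def by (intro sets_completionI_sets) simp

lemma emeasure_Qk: "emeasure lebesgue (Qk k :: (real^'p::finite) set) = ennreal ((2^k)^CARD('p))"
proof -
  have b: "Qk k \<in> sets (lborel :: (real^'p) measure)" unfolding Qk_def by simp
  have "emeasure lebesgue (Qk k :: (real^'p) set) = emeasure lborel (Qk k :: (real^'p) set)"
    using b by simp
  also have "\<dots> = ennreal (\<Prod>b\<in>Basis. ((\<chi> j. 2^(k+1)) - (\<chi> j. 2^k) :: real^'p) \<bullet> b)"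
    unfolding Qk_def by (subst emeasure_lborel_box) (auto simp: Basis_vec_def inner_axis)
  also have "(\<Prod>b\<in>Basis. ((\<chi> j. 2^(k+1)) - (\<chi> j. 2^k) :: real^'p) \<bullet> b) = (\<Prod>b\<in>(Basis::(real^'p) set). 2^k)"
    by (intro prod.cong refl) (auto simp: Basis_vec_def inner_axis)
  also have "\<dots> = (2^k)^CARD('p)" by simp
  finally show ?thesis .
qed



lemma ennreal_top_lin:
  fixes x :: ennreal and c :: real
  assumes c: "0 < c" and h: "\<And>m::nat. ennreal (real m * c) \<le> x"
  shows "x = \<top>"
proof (rule ccontr)
  assume "x \<noteq> \<top>"
  then obtain y where y: "x = ennreal y" "0 \<le> y" by (cases x) auto
  define m where "m = nat \<lceil>y / c\<rceil> + 1"
  have "y / c < real m" unfolding m_def by linarith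
  then have "y < real m * c" using c by (simp add: field_simps)
  moreover have "real m * c \<le> y" using h[of m] y by simp
  ultimately show False by simp
qed

lemma logm:
  fixes R :: "real^'p::finite" and K :: nat
  assumes R: "\<forall>j. 0 < R$j"
  shows "log_measure ((\<Union>k\<in>{K..}. Qk k) \<inter> Bset R) = \<top>"
proof -
  define E :: "(real^'p) set" where "E = (\<Union>k\<in>{K..}. Qk k)"
  define p where "p = CARD('p)"
  obtain n where n: "(\<Sum>j\<in>UNIV. \<bar>R$j\<bar>) < 2^n" using real_arch_pow[of 2] by auto
  define k0 where "k0 = n + K"
  have sub: "Qk k \<subseteq> E \<inter> Bset R" if "k0 \<le> k" for k
  proof
    fix r :: "real^'p" assume r: "r \<in> Qk k"
    have "k \<in> {K..}" using that unfolding k0_def by simp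
    then have "r \<in> E" unfolding E_def using r by blast
    moreover have "R$j \<le> r$j" for j
    proof -
      have "R$j \<le> (\<Sum>j\<in>UNIV. \<bar>R$j\<bar>)"
        by (rule order.trans[OF abs_ge_self member_le_sum[of j UNIV "\<lambda>j. \<bar>R$j\<bar>"]]) auto
      also have "\<dots> < 2^n" by (rule n)
      also have "(2::real)^n \<le> 2^k" using that unfolding k0_def by (intro power_increasing) auto
      also have "\<dots> < r$j" using r unfolding mem_Qk by auto
      finally show ?thesis by simp
    qed
    ultimately show "r \<in> E \<inter> Bset R" unfolding Bset_def by auto
  qed
  define c where "c k = ennreal ((1 / 2^(k+1))^p)" for k :: nat
  have pw: "(\<Sum>k\<in>I. c k * indicator (Qk k) r) \<le> indicator (E \<inter> Bset R) r * ennreal (\<Prod>j\<in>UNIV. 1 / (r$j))"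
    if I: "finite I" "I \<subseteq> {k0..}" for I r
  proof (cases "\<exists>k'\<in>I. r \<in> Qk k'")
    case True
    then obtain k' where k': "k' \<in> I" "r \<in> Qk k'" by blast
    have "(\<Sum>k\<in>I. c k * indicator (Qk k) r) = (\<Sum>k\<in>I. if k = k' then c k' else 0)"
    proof (intro sum.cong refl)
      fix k
      show "c k * indicator (Qk k) r = (if k = k' then c k' else 0)"
      proof (cases "k = k'")
        case True then show ?thesis using k'(2) by simp
      next
        case False
        then have "r \<notin> Qk k" using Qk_disj[of r k k'] k'(2) by blast
        then show ?thesis using False by simp
      qed
    qed
    also have "\<dots> = c k'" using sum.delta[OF I(1), of k' "\<lambda>_. c k'"] k'(1) by simp
    also have "\<dots> \<le> ennreal (\<Prod>j\<in>UNIV. 1 / (r$j))"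
      unfolding c_def
    proof (rule ennreal_leI)
      have "(1 / 2^(k'+1))^p = (\<Prod>j\<in>(UNIV::'p set). 1 / 2^(k'+1))" unfolding p_def by simp
      also have "\<dots> \<le> (\<Prod>j\<in>UNIV. 1 / (r$j))"
      proof (rule prod_mono, rule conjI)
        fix j
        have rj: "2^k' < r$j" "r$j < 2^(k'+1)" using k'(2) unfolding mem_Qk by auto
        have "(0::real) < 2^k'" by simp
        then have "0 < r$j" using rj by linarith
        then show "1 / 2^(k'+1) \<le> 1 / r$j" using rj by (intro divide_left_mono) auto
      qed simp
      finally show "(1 / 2^(k'+1))^p \<le> (\<Prod>j\<in>UNIV. 1 / (r$j))" .
    qed
    also have "\<dots> = indicator (E \<inter> Bset R) r * ennreal (\<Prod>j\<in>UNIV. 1 / (r$j))"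
      using sub[of k'] k' I by (auto simp: indicator_def)
    finally show ?thesis .
  next
    case False
    then have "(\<Sum>k\<in>I. c k * indicator (Qk k) r) = 0" by (intro sum.neutral) auto
    then show ?thesis by simp
  qed
  have lower: "ennreal (real m * (1/2)^p) \<le> log_measure (E \<inter> Bset R)" for m
  proof -
    define I where "I = {k0..<k0+m}"
    have "ennreal (real m * (1/2)^p) = (\<Sum>k\<in>I. ennreal ((1/2)^p))"
      unfolding I_def by (simp add: ennreal_of_nat_eq_real_of_nat ennreal_mult')
    also have "\<dots> = (\<Sum>k\<in>I. c k * emeasure lebesgue (Qk k :: (real^'p) set))"
    proof (intro sum.cong refl)
      fix k
      have "c k * emeasure lebesgue (Qk k :: (real^'p) set) = ennreal ((1 / 2^(k+1))^p * (2^k)^p)"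
        unfolding c_def emeasure_Qk p_def by (simp add: ennreal_mult')
      also have "(1 / 2^(k+1))^p * ((2::real)^k)^p = (1/2)^p"
      proof -
        have "1 / 2^(k+1) * (2::real)^k = 1/2" by simp
        then show ?thesis by (metis power_mult_distrib)
      qed
      finally show "ennreal ((1/2)^p) = c k * emeasure lebesgue (Qk k :: (real^'p) set)" by (rule sym)
    qed
    also have "\<dots> = (\<integral>\<^sup>+ r. (\<Sum>k\<in>I. c k * indicator (Qk k :: (real^'p) set) r) \<partial>lebesgue)"
    proof -
      have meas: "(\<lambda>r::real^'p. c k * indicator (Qk k) r) \<in> borel_measurable lebesgue" for k
        using Qk_sets[of k] by measurable
      show ?thesis
        by (subst nn_integral_sum[OF meas]) (simp add: nn_integral_cmult_indicator[OF Qk_sets])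
    qed
    also have "\<dots> \<le> log_measure (E \<inter> Bset R)"
      unfolding log_measure_def by (rule nn_integral_mono) (rule pw, auto simp: I_def)
    finally show ?thesis .
  qed
  have "log_measure (E \<inter> Bset R) = \<top>"
    by (rule ennreal_top_lin[OF _ lower]) simp
  then show ?thesis unfolding E_def .
qed



theorem theorem3p1:
  fixes \<omega> :: "nat^'p::finite \<Rightarrow> real \<Rightarrow> real"
  assumes meas: "\<And>n. \<omega> n \<in> borel_measurable steinhaus"
    and indep: "prob_space.indep_vars steinhaus (\<lambda>_. borel) \<omega> UNIV"
    and unif: "\<And>n. distr steinhaus lborel (\<omega> n) = uniform_measure lborel {0..1}"
  shows "\<forall>\<epsilon>>0. AE t in steinhaus. \<exists>E.
           E \<in> sets lebesgue \<and> E \<subseteq> {r. \<forall>j. 0 < r $ j} \<and>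
           (\<forall>R. (\<forall>j. 0 < R $ j) \<longrightarrow> log_measure (E \<inter> Bset R) = \<infinity>) \<and>
           (\<forall>r\<in>E. max_mod \<omega> r t \<ge>
               max_term r * (ln (max_term r)) powr (real CARD('p) / 4 - \<epsilon>))"
proof (intro allI impI)
  fix \<epsilon> :: real assume e: "0 < \<epsilon>"
  define p where "p = CARD('p)"
  have p1: "1 \<le> p" unfolding p_def by (simp add: Suc_le_eq)
  define C where "C = (8 * real p) powr (real p / 4) * exp (real p)"
  obtain K where K: "max (4 * exp 4) (C powr (1/\<epsilon>)) < (2::real)^K"
    using real_arch_pow[of 2 "max (4 * exp 4) (C powr (1/\<epsilon>))"] by auto
  define E :: "(real^'p) set" where "E = (\<Union>k\<in>{K..}. Qk k)"
  have Esets: "E \<in> sets lebesgue"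
  proof -
    have "open E" unfolding E_def Qk_def by (intro open_UN ballI open_box)
    then show ?thesis by (intro sets_completionI_sets) simp
  qed
  have Epos: "E \<subseteq> {r. \<forall>j. 0 < r $ j}"
  proof
    fix r assume "r \<in> E"
    then obtain k where "r \<in> Qk k" unfolding E_def by blast
    then have a: "2^k < r$j" for j unfolding mem_Qk by auto
    have b: "(0::real) < 2^k" by simp
    have "0 < r$j" for j using a[of j] b by linarith
    then show "r \<in> {r. \<forall>j. 0 < r $ j}" by simp
  qed
  have Elog: "\<forall>R. (\<forall>j. 0 < R $ j) \<longrightarrow> log_measure (E \<inter> Bset R) = \<infinity>"
    unfolding E_def using logm by auto
  have Eineq: "max_term r * (ln (max_term r)) powr (real CARD('p) / 4 - \<epsilon>) \<le> max_mod \<omega> r t"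
    if r: "r \<in> E" for r t
  proof -
    obtain k where k: "k \<in> {K..}" "r \<in> Qk k" using r unfolding E_def by blast
    define s :: real where "s = 2^k"
    have sK: "(2::real)^K \<le> s" unfolding s_def using k(1) by (intro power_increasing) auto
    have s1: "4 * exp 4 \<le> s" using K sK by linarith
    have exp1: "1 \<le> exp (4::real)" by simp
    have s4: "4 \<le> s" using s1 exp1 by linarith
    have rs: "s < r$j" "r$j < 2 * s" for j using k(2) unfolding mem_Qk s_def by auto
    have s2: "C \<le> s powr \<epsilon>"
    proof -
      have Cpos: "0 < C" unfolding C_def using p1 by simp
      have "C = (C powr (1/\<epsilon>)) powr \<epsilon>" using Cpos e by (simp add: powr_powr)
      also have "\<dots> \<le> s powr \<epsilon>" by (rule powr_mono2) (use K sK e in auto)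
      finally show ?thesis .
    qed
    show ?thesis
      using final_ineq[OF p1[unfolded p_def] e s1 s2[unfolded C_def p_def] stepB(1)[OF s4 rs] stepB(2)[OF s4 rs]
          stepB(3)[OF s4 rs, of \<omega> t]] .
  qed
  show "AE t in steinhaus. \<exists>E.
           E \<in> sets lebesgue \<and> E \<subseteq> {r. \<forall>j. 0 < r $ j} \<and>
           (\<forall>R. (\<forall>j. 0 < R $ j) \<longrightarrow> log_measure (E \<inter> Bset R) = \<infinity>) \<and>
           (\<forall>r\<in>E. max_mod \<omega> r t \<ge>
               max_term r * (ln (max_term r)) powr (real CARD('p) / 4 - \<epsilon>))"
    by (rule AE_I2) (use Esets Epos Elog Eineq in blast)
qed

end
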